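(* Let $(\mathcal A,X,\alpha)$ be a PTS of type $\diamond\in\{0,*,\omega,\infty\}$. For every $x\in X$ the defining equations of the trace determine a well-defined $\sigma$-finite pre-measure $\mathbf{tr}(x):\mathcal S_\diamond\to[0,1]$, and its unique extension to a measure on $\sigma(\mathcal S_\diamond)$ is a sub-probability measure; for $\diamond\in\{\omega,\infty\}$ it is a probability measure.
   Context: $\mathcal A$ is a finite alphabet with $\sigma$-algebra $\mathcal P(\mathcal A)$; $\mathbf 1=\{\checkmark\}$; products carry product $\sigma$-algebras and disjoint unions the disjoint-union $\sigma$-algebra. $\mathbb S(Y)$ / $\mathbb P(Y)$: sub-probability / probability measures on $\Sigma_Y$, measurable structure generated by evaluation maps $P\mapsto P(S)$. A PTS of type $\diamond$ is $(\mathcal A,X,\alpha)$ with $X$ a measurable space and $\alpha$ a measurable map $X\to\mathbb S(\mathcal A\times X)$ (type $0$), $X\to\mathbb S(\mathcal A\times X+\mathbf 1)$ (type $*$), $X\to\mathbb P(\mathcal A\times X)$ (type $\omega$), $X\to\mathbb P(\mathcal A\times X+\mathbf 1)$ (type $\infty$). $\mathbf P_a(x,S):=\alpha(x)(\{a\}\times S)$ for $S\in\Sigma_X$. Words: $\mathcal A^*,\mathcal A^\omega$ finite/infinite words, $\mathcal A^\infty=\mathcal A^*\cup\mathcal A^\omega$, $\mathcal A^0:=\emptyset$ for type $0$ (carrier), $\sqsubseteq$ prefix; $C_\omega(u)=\{v\in\mathcal A^\omega:u\sqsubseteq v\}$, $C_\infty(u)=\{v\in\mathcal A^\infty:u\sqsubseteq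 v\}$. Semirings: $\mathcal S_0=\{\emptyset\}$ on $\emptyset$, $\mathcal S_*=\{\emptyset\}\cup\{\{u\}:u\in\mathcal A^*\}$, $\mathcal S_\omega=\{\emptyset\}\cup\{C_\omega(u):u\in\mathcal A^*\}$, $\mathcal S_\infty=\{\emptyset\}\cup\{\{u\}\}_{u\in\mathcal A^*}\cup\{C_\infty(u)\}_{u\in\mathcal A^*}$. Trace equations: $\mathbf{tr}(x)(\emptyset)=0$; for $\diamond\in\{*,\infty\}$: $\mathbf{tr}(x)(\{\epsilon\})=\alpha(x)(\mathbf 1)$ and $\mathbf{tr}(x)(\{au\})=\int_{x'\in X}\mathbf{tr}(x')(\{u\})\,d\mathbf P_a(x,x')$; for $\diamond\in\{\omega,\infty\}$: $\mathbf{tr}(x)(C_\diamond(\epsilon))=1$ and $\mathbf{tr}(x)(C_\diamond(au))=\int_{x'\in X}\mathbf{tr}(x')(C_\diamond(u))\,d\mathbf P_a(x,x')$, for all $a\in\mathcal A$, $u\in\mathcal A^*$. A pre-measure on a semiring is a map into $[0,\infty]$ vanishing on $\emptyset$ and $\sigma$-additive (on countable disjoint families whose union lies in the semiring); $\sigma$-finite means some countable cover by members of finite measure exists. *)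

theory Defs
  imports "HOL-Probability.Probability" "HOL-Library.Stream"
begin

datatype ptstype = T0 | TStar | TOmega | TInf

text \<open>Disjoint union Y + 1 (with None playing the role of the terminal checkmark),
  carrying the disjoint-union sigma-algebra.\<close>
definition plus_one_space :: "'b measure \<Rightarrow> 'b option measure" where
  "plus_one_space N = measure_of (insert None (Some ` space N))
     ({Some ` S | S. S \<in> sets N} \<union> {insert None (Some ` S) | S. S \<in> sets N}) (\<lambda>_. 0)"

text \<open>Isomorphic copy of Y inside 'b option (used for types 0 and omega, no termination).\<close>
definition some_space :: "'b measure \<Rightarrow> 'b option measure" where
  "some_space N = measure_of (Some ` space N) {Some ` S | S. S \<in> sets N} (\<lambda>_. 0)"

definition pts_cod :: "ptstype \<Rightarrow> 'x measure \<Rightarrow> ('a \<times> 'x) option measure" where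
  "pts_cod t M = (if t \<in> {TStar, TInf}
      then plus_one_space (count_space UNIV \<Otimes>\<^sub>M M)
      else some_space (count_space UNIV \<Otimes>\<^sub>M M))"

definition is_pts :: "ptstype \<Rightarrow> 'x measure \<Rightarrow> ('x \<Rightarrow> ('a::finite \<times> 'x) option measure) \<Rightarrow> bool" where
  "is_pts t M \<alpha> \<longleftrightarrow> \<alpha> \<in> M \<rightarrow>\<^sub>M (if t \<in> {TOmega, TInf}
      then prob_algebra (pts_cod t M) else subprob_algebra (pts_cod t M))"

definition transP :: "'x measure \<Rightarrow> ('x \<Rightarrow> ('a \<times> 'x) option measure) \<Rightarrow> 'a \<Rightarrow> 'x \<Rightarrow> 'x measure" where
  "transP M \<alpha> a x = measure_of (space M) (sets M) (\<lambda>S. emeasure (\<alpha> x) (Some ` ({a} \<times> S)))"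

type_synonym 'a word = "'a list + 'a stream"

fun words :: "ptstype \<Rightarrow> 'a word set" where
  "words T0 = {}"
| "words TStar = range Inl"
| "words TOmega = range Inr"
| "words TInf = UNIV"

fun wprefix :: "'a list \<Rightarrow> 'a word \<Rightarrow> bool" where
  "wprefix u (Inl v) = (\<exists>w. v = u @ w)"
| "wprefix u (Inr s) = (stake (length u) s = u)"

definition cyl :: "ptstype \<Rightarrow> 'a list \<Rightarrow> 'a word set" where
  "cyl t u = {w \<in> words t. wprefix u w}"

fun pts_semiring :: "ptstype \<Rightarrow> 'a word set set" where
  "pts_semiring T0 = {{}}"
| "pts_semiring TStar = {{}} \<union> {{Inl u} | u. True}"
| "pts_semiring TOmega = {{}} \<union> range (cyl TOmega)"
| "pts_semiring TInf = {{}} \<union> {{Inl u} | u. True} \<union> range (cyl TInf)"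

definition trace_eqs :: "ptstype \<Rightarrow> 'x measure \<Rightarrow> ('x \<Rightarrow> ('a \<times> 'x) option measure)
    \<Rightarrow> ('x \<Rightarrow> 'a word set \<Rightarrow> ennreal) \<Rightarrow> bool" where
  "trace_eqs t M \<alpha> tr \<longleftrightarrow> (\<forall>x\<in>space M.
     tr x {} = 0 \<and>
     (t \<in> {TStar, TInf} \<longrightarrow>
        tr x {Inl []} = emeasure (\<alpha> x) {None} \<and>
        (\<forall>a u. tr x {Inl (a # u)} = (\<integral>\<^sup>+ x'. tr x' {Inl u} \<partial>transP M \<alpha> a x))) \<and>
     (t \<in> {TOmega, TInf} \<longrightarrow>
        tr x (cyl t []) = 1 \<and>
        (\<forall>a u. tr x (cyl t (a # u)) = (\<integral>\<^sup>+ x'. tr x' (cyl t u) \<partial>transP M \<alpha> a x))))"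

definition sigma_finite_on :: "'b set \<Rightarrow> 'b set set \<Rightarrow> ('b set \<Rightarrow> ennreal) \<Rightarrow> bool" where
  "sigma_finite_on \<Omega> S \<mu> \<longleftrightarrow>
     (\<exists>A::nat \<Rightarrow> 'b set. range A \<subseteq> S \<and> \<Union>(range A) = \<Omega> \<and> (\<forall>i. \<mu> (A i) \<noteq> \<infinity>))"

end

theory Submission
  imports Defs "HOL-Library.Sublist"
begin


lemma sets_plus_one:
  "sets (plus_one_space N) = sigma_sets (insert None (Some ` space N))
     ({Some ` S | S. S \<in> sets N} \<union> {insert None (Some ` S) | S. S \<in> sets N})"
  unfolding plus_one_space_def
  by (rule sets_measure_of) (auto dest: sets.sets_into_space)

lemma space_plus_one: "space (plus_one_space N) = insert None (Some ` space N)"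
  unfolding plus_one_space_def
  by (rule space_measure_of) (auto dest: sets.sets_into_space)

lemma sets_some_space:
  "sets (some_space N) = sigma_sets (Some ` space N) {Some ` S | S. S \<in> sets N}"
  unfolding some_space_def
  by (rule sets_measure_of) (auto dest: sets.sets_into_space)

lemma space_some_space: "space (some_space N) = Some ` space N"
  unfolding some_space_def
  by (rule space_measure_of) (auto dest: sets.sets_into_space)

lemma Some_in_cod: "S \<in> sets (count_space UNIV \<Otimes>\<^sub>M M) \<Longrightarrow> Some ` S \<in> sets (pts_cod t M)"
  unfolding pts_cod_def by (auto simp: sets_plus_one sets_some_space intro: sigma_sets.Basic)

lemma None_in_cod: "t \<in> {TStar, TInf} \<Longrightarrow> {None} \<in> sets (pts_cod t M)"
  unfolding pts_cod_def using sigma_sets.Basic[of "insert None (Some ` {})"]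
  by (auto simp: sets_plus_one)

lemma space_cod: "space (pts_cod t M) = (if t \<in> {TStar, TInf} then insert None (Some ` (UNIV \<times> space M)) else Some ` (UNIV \<times> space M))"
  unfolding pts_cod_def by (auto simp: space_plus_one space_some_space space_pair_measure)

lemma finite_len_eq: "finite {u::'a::finite list. length u = k}"
  using finite_lists_length_eq[of "UNIV::'a set" k] by simp

lemma finite_len_less: "finite {u::'a::finite list. length u < k}"
proof -
  have "{u::'a list. length u < k} \<subseteq> {u. set u \<subseteq> UNIV \<and> length u \<le> k}" by auto
  then show ?thesis using finite_lists_length_le[of "UNIV::'a set" k] finite_subset by auto
qed

lemma inj_Cons2: "inj_on (\<lambda>(a, u). a # u) X"
  by (auto simp: inj_on_def)

lemma lists_Suc_eq: "{u. length u = Suc k} = (\<lambda>(a, u). a # u) ` (UNIV \<times> {u. length u = k})"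
proof (rule set_eqI)
  fix u :: "'a list"
  show "u \<in> {u. length u = Suc k} \<longleftrightarrow> u \<in> (\<lambda>(a, u). a # u) ` (UNIV \<times> {u. length u = k})"
    by (cases u) (auto simp: image_def)
qed

lemma lists_less_Suc: "{u. length u < Suc k} = insert [] ((\<lambda>(a, u). a # u) ` (UNIV \<times> {u. length u < k}))"
proof (rule set_eqI)
  fix u :: "'a list"
  show "u \<in> {u. length u < Suc k} \<longleftrightarrow> u \<in> insert [] ((\<lambda>(a, u). a # u) ` (UNIV \<times> {u. length u < k}))"
    by (cases u) (auto simp: image_def)
qed
lemma sum_len_Suc: "(\<Sum>u\<in>{u::'a::finite list. length u = Suc k}. g u) = (\<Sum>a\<in>UNIV. \<Sum>u\<in>{u. length u = k}. g (a # u))"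
  unfolding lists_Suc_eq
  by (subst sum.reindex[OF inj_Cons2]) (simp add: sum.cartesian_product split_def)

lemma sum_len_less_Suc: "(\<Sum>u\<in>{u::'a::finite list. length u < Suc k}. g u) = g [] + (\<Sum>a\<in>UNIV. \<Sum>u\<in>{u. length u < k}. g (a # u))"
proof -
  have "[] \<notin> (\<lambda>(a, u). a # u) ` (UNIV \<times> {u::'a list. length u < k})" by auto
  moreover have "finite ((\<lambda>(a, u). a # u) ` (UNIV \<times> {u::'a list. length u < k}))"
    by (intro finite_imageI finite_cartesian_product) (simp_all add: finite_len_less)
  ultimately show ?thesis unfolding lists_less_Suc
    by (simp add: sum.reindex[OF inj_Cons2]) (simp add: sum.cartesian_product split_def)
qed

locale ptsl =
  fixes t :: ptstype and M :: "'x measure" and \<alpha> :: "'x \<Rightarrow> ('a::finite \<times> 'x) option measure"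
  assumes pts: "is_pts t M \<alpha>"
begin

abbreviation C :: "('a \<times> 'x) option measure" where "C \<equiv> pts_cod t M"

definition E :: "'a \<Rightarrow> ('a \<times> 'x) option set" where
  "E a = Some ` ({a} \<times> space M)"

lemma E_sets: "E a \<in> sets C"
  unfolding E_def by (rule Some_in_cod) auto

lemma alpha_meas: "\<alpha> \<in> M \<rightarrow>\<^sub>M subprob_algebra C"
  using pts unfolding is_pts_def by (auto split: if_splits dest: measurable_prob_algebraD)

lemma alpha_space: "x \<in> space M \<Longrightarrow> subprob_space (\<alpha> x) \<and> sets (\<alpha> x) = sets C"
  using measurable_space[OF alpha_meas] by (auto simp: space_subprob_algebra)

lemma alpha_sets[measurable_cong]: "x \<in> space M \<Longrightarrow> sets (\<alpha> x) = sets C"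
  using alpha_space by auto

lemma alpha_prob: "t \<in> {TOmega, TInf} \<Longrightarrow> x \<in> space M \<Longrightarrow> prob_space (\<alpha> x)"
  using measurable_space[OF pts[unfolded is_pts_def]] by (auto simp: space_prob_algebra)

definition pr :: "'x \<Rightarrow> ('a \<times> 'x) option \<Rightarrow> 'x" where
  "pr x0 y = (case y of None \<Rightarrow> x0 | Some p \<Rightarrow> snd p)"

lemma pr_meas: assumes x0: "x0 \<in> space M" shows "pr x0 \<in> C \<rightarrow>\<^sub>M M"
proof (rule measurableI)
  fix y assume "y \<in> space C"
  then show "pr x0 y \<in> space M" using x0 by (auto simp: space_cod pr_def split: if_splits)
next
  fix S assume S: "S \<in> sets M"
  have eq: "pr x0 -` S \<inter> space C = (if x0 \<in> S then {None} \<inter> space C else {}) \<union> Some ` (UNIV \<times> S)"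
  proof (intro set_eqI)
    fix y show "y \<in> pr x0 -` S \<inter> space C \<longleftrightarrow> y \<in> (if x0 \<in> S then {None} \<inter> space C else {}) \<union> Some ` (UNIV \<times> S)"
      using sets.sets_into_space[OF S] by (cases y) (auto simp: space_cod pr_def)
  qed
  have 1: "{None} \<inter> space C \<in> sets C"
  proof (cases "t \<in> {TStar, TInf}")
    case True
    then show ?thesis using None_in_cod[OF True] by (simp add: space_cod)
  next
    case False
    then have "{None} \<inter> space C = {}" by (auto simp: space_cod)
    then show ?thesis by simp
  qed
  have 2: "Some ` (UNIV \<times> S) \<in> sets C" by (rule Some_in_cod) (use S in auto)
  show "pr x0 -` S \<inter> space C \<in> sets C" unfolding eq by (rule sets.Un) (use 1 2 in auto)
qed

definition D :: "'a \<Rightarrow> 'x \<Rightarrow> 'x measure" where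
  "D a x = distr (density (\<alpha> x) (indicator (E a))) M (pr x)"

lemma transP_eq: assumes x: "x \<in> space M" shows "transP M \<alpha> a x = D a x"
proof -
  have sD: "sets (D a x) = sets M" "space (D a x) = space M" by (simp_all add: D_def)
  have mp: "pr x \<in> density (\<alpha> x) (indicator (E a)) \<rightarrow>\<^sub>M M"
    using pr_meas[OF x] measurable_cong_sets[of "density (\<alpha> x) (indicator (E a))" C M M] alpha_sets[OF x] by simp
  have "transP M \<alpha> a x = measure_of (space M) (sets M) (emeasure (D a x))"
    unfolding transP_def
  proof (rule measure_of_eq)
    show "sets M \<subseteq> Pow (space M)" by (auto dest: sets.sets_into_space)
  next
    fix S assume "S \<in> sigma_sets (space M) (sets M)"
    then have S: "S \<in> sets M" by (simp add: sets.sigma_sets_eq)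
    have "emeasure (D a x) S = emeasure (density (\<alpha> x) (indicator (E a))) (pr x -` S \<inter> space (\<alpha> x))"
      unfolding D_def using S mp by (simp add: emeasure_distr)
    also have "\<dots> = emeasure (\<alpha> x) (E a \<inter> (pr x -` S \<inter> space (\<alpha> x)))"
    proof (rule emeasure_restricted)
      show "E a \<in> sets (\<alpha> x)" using E_sets alpha_sets[OF x] by simp
      show "pr x -` S \<inter> space (\<alpha> x) \<in> sets (\<alpha> x)"
        using measurable_sets[OF pr_meas[OF x] S] alpha_sets[OF x] sets_eq_imp_space_eq[OF alpha_sets[OF x]] by simp
    qed
    also have "E a \<inter> (pr x -` S \<inter> space (\<alpha> x)) = Some ` ({a} \<times> S)"
      using sets.sets_into_space[OF S] sets_eq_imp_space_eq[OF alpha_sets[OF x]]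
      by (auto simp: E_def pr_def space_cod)
    finally show "emeasure (\<alpha> x) (Some ` ({a} \<times> S)) = emeasure (D a x) S" by simp
  qed
  also have "\<dots> = D a x" using measure_of_of_measure[of "D a x"] sD by simp
  finally show ?thesis .
qed

definition h :: "'a \<Rightarrow> ('x \<Rightarrow> ennreal) \<Rightarrow> ('a \<times> 'x) option \<Rightarrow> ennreal" where
  "h a f y = indicator (E a) y * f (snd (the y))"

lemma h_meas: assumes f: "f \<in> borel_measurable M" shows "h a f \<in> borel_measurable C"
proof (cases "space M = {}")
  case True
  have "\<And>y. y \<in> space C \<Longrightarrow> h a f y = 0" using True by (auto simp: h_def E_def)
  then show ?thesis by (subst measurable_cong[where g="\<lambda>_. 0"]) auto
next
  case False
  then obtain x0 where x0: "x0 \<in> space M" by auto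
  have "\<And>y. y \<in> space C \<Longrightarrow> h a f y = indicator (E a) y * f (pr x0 y)"
    by (auto simp: h_def E_def pr_def indicator_def)
  moreover have "(\<lambda>y. indicator (E a) y * f (pr x0 y)) \<in> borel_measurable C"
    by (intro borel_measurable_times_ennreal borel_measurable_indicator E_sets measurable_compose[OF pr_meas[OF x0] f])
  ultimately show ?thesis by (subst measurable_cong) auto
qed

lemma nn_transP: assumes x: "x \<in> space M" and f: "f \<in> borel_measurable M"
  shows "(\<integral>\<^sup>+y. f y \<partial>transP M \<alpha> a x) = (\<integral>\<^sup>+y. h a f y \<partial>\<alpha> x)"
proof -
  have mp: "pr x \<in> density (\<alpha> x) (indicator (E a)) \<rightarrow>\<^sub>M M"
    using pr_meas[OF x] measurable_cong_sets[of "density (\<alpha> x) (indicator (E a))" C M M] alpha_sets[OF x] by simp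
  have "(\<integral>\<^sup>+y. f y \<partial>transP M \<alpha> a x) = (\<integral>\<^sup>+y. f (pr x y) \<partial>density (\<alpha> x) (indicator (E a)))"
    unfolding transP_eq[OF x] D_def using mp f by (simp add: nn_integral_distr)
  also have "\<dots> = (\<integral>\<^sup>+y. indicator (E a) y * f (pr x y) \<partial>\<alpha> x)"
    by (rule nn_integral_density)
      (simp_all add: measurable_cong_sets[OF alpha_sets[OF x] refl] borel_measurable_indicator[OF E_sets] measurable_compose[OF pr_meas[OF x] f])
  also have "\<dots> = (\<integral>\<^sup>+y. h a f y \<partial>\<alpha> x)"
    by (rule nn_integral_cong) (auto simp: h_def E_def pr_def indicator_def)
  finally show ?thesis .
qed

lemma transP_integral_meas: assumes f: "f \<in> borel_measurable M"
  shows "(\<lambda>x. \<integral>\<^sup>+y. f y \<partial>transP M \<alpha> a x) \<in> borel_measurable M"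
proof -
  have "(\<lambda>x. \<integral>\<^sup>+y. h a f y \<partial>\<alpha> x) \<in> borel_measurable M"
    using measurable_compose[OF alpha_meas nn_integral_measurable_subprob_algebra[OF h_meas[OF f]]] .
  then show ?thesis by (subst measurable_cong[OF nn_transP[OF _ f]]) auto
qed

lemma transP_space: assumes x: "x \<in> space M"
  shows "(\<integral>\<^sup>+y. 1 \<partial>transP M \<alpha> a x) = emeasure (\<alpha> x) (E a)"
proof -
  have "(\<integral>\<^sup>+y. 1 \<partial>transP M \<alpha> a x) = (\<integral>\<^sup>+y. h a (\<lambda>_. 1) y \<partial>\<alpha> x)" by (rule nn_transP[OF x]) auto
  also have "\<dots> = (\<integral>\<^sup>+y. indicator (E a) y \<partial>\<alpha> x)" by (simp add: h_def)
  also have "\<dots> = emeasure (\<alpha> x) (E a)" using E_sets alpha_sets[OF x] by simp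
  finally show ?thesis .
qed

lemma space_transP: "space (transP M \<alpha> a x) = space M"
  unfolding transP_def by (simp add: space_measure_of_conv)


lemma sets_transP: "sets (transP M \<alpha> a x) = sets M"
  unfolding transP_def by (simp add: sets_measure_of_conv sets.sigma_sets_eq sets.space_closed)

lemma meas_transP: assumes "f \<in> borel_measurable M" shows "f \<in> borel_measurable (transP M \<alpha> a x)"
  using assms by (simp only: measurable_cong_sets[OF sets_transP[of a x] refl])

primrec fin :: "'a list \<Rightarrow> 'x \<Rightarrow> ennreal" where
  "fin [] x = emeasure (\<alpha> x) {None}"
| "fin (a # u) x = (\<integral>\<^sup>+x'. fin u x' \<partial>transP M \<alpha> a x)"

primrec cy :: "'a list \<Rightarrow> 'x \<Rightarrow> ennreal" where
  "cy [] x = 1"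
| "cy (a # u) x = (\<integral>\<^sup>+x'. cy u x' \<partial>transP M \<alpha> a x)"

lemma None_notin: "t \<notin> {TStar, TInf} \<Longrightarrow> x \<in> space M \<Longrightarrow> emeasure (\<alpha> x) {None} = 0"
proof -
  assume t: "t \<notin> {TStar, TInf}" and x: "x \<in> space M"
  have "{None} \<notin> sets C"
  proof
    assume "{None} \<in> sets C"
    from sets.sets_into_space[OF this] t show False by (auto simp: space_cod)
  qed
  then show ?thesis using alpha_sets[OF x] by (simp add: emeasure_notin_sets)
qed

lemma fin_nil_meas: "(\<lambda>x. emeasure (\<alpha> x) {None}) \<in> borel_measurable M"
proof (cases "t \<in> {TStar, TInf}")
  case True
  show ?thesis by (rule measurable_compose[OF alpha_meas measurable_emeasure_subprob_algebra[OF None_in_cod[OF True]]])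
next
  case False
  show ?thesis by (subst measurable_cong[where g="\<lambda>_. 0"]) (use None_notin[OF False] in auto)
qed

lemma fin_meas: "fin u \<in> borel_measurable M"
  by (induction u) (simp_all add: fin_nil_meas transP_integral_meas)

lemma cy_meas: "cy u \<in> borel_measurable M"
  by (induction u) (simp_all add: transP_integral_meas)

lemma decomp: assumes x: "x \<in> space M"
  shows "emeasure (\<alpha> x) (space (\<alpha> x)) = fin [] x + (\<Sum>a\<in>UNIV. emeasure (\<alpha> x) (E a))"
proof -
  have sp: "space (\<alpha> x) = space C" using sets_eq_imp_space_eq[OF alpha_sets[OF x]] .
  have Es: "\<And>a. E a \<in> sets (\<alpha> x)" using E_sets alpha_sets[OF x] by simp
  have sumE: "(\<Sum>a\<in>UNIV. emeasure (\<alpha> x) (E a)) = emeasure (\<alpha> x) (\<Union>a\<in>UNIV. E a)"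
    apply (rule sum_emeasure)
    subgoal using Es by auto
    subgoal by (auto simp: disjoint_family_on_def E_def)
    by simp
  have UE: "(\<Union>a\<in>UNIV. E a) = Some ` (UNIV \<times> space M)" by (auto simp: E_def)
  have UEs: "(\<Union>a\<in>UNIV. E a) \<in> sets (\<alpha> x)" using Es by blast
  show ?thesis
  proof (cases "t \<in> {TStar, TInf}")
    case True
    have N: "{None} \<in> sets (\<alpha> x)" using None_in_cod[OF True] alpha_sets[OF x] by simp
    have U: "space (\<alpha> x) = {None} \<union> (\<Union>a\<in>UNIV. E a)"
      unfolding sp UE space_cod using True by simp
    have "emeasure (\<alpha> x) (space (\<alpha> x)) = emeasure (\<alpha> x) ({None} \<union> (\<Union>a\<in>UNIV. E a))"
      using U by simp
    also have "\<dots> = emeasure (\<alpha> x) {None} + emeasure (\<alpha> x) (\<Union>a\<in>UNIV. E a)"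
      by (rule plus_emeasure[symmetric, OF N UEs]) (auto simp: E_def)
    finally show ?thesis using sumE by simp
  next
    case False
    have U: "space (\<alpha> x) = (\<Union>a\<in>UNIV. E a)"
      unfolding sp UE space_cod using False by simp
    show ?thesis using sumE None_notin[OF False x] U by simp
  qed
qed

lemma alpha_le1: "x \<in> space M \<Longrightarrow> emeasure (\<alpha> x) S \<le> 1"
  using alpha_space subprob_space.subprob_emeasure_le_1 by blast

lemma fin_zero: "t \<notin> {TStar, TInf} \<Longrightarrow> x \<in> space M \<Longrightarrow> fin u x = 0"
proof (induction u arbitrary: x)
  case Nil then show ?case using None_notin by simp
next
  case (Cons a u)
  have "fin (a # u) x = (\<integral>\<^sup>+x'. 0 \<partial>transP M \<alpha> a x)"
    unfolding fin.simps by (rule nn_integral_cong, use Cons in \<open>simp add: space_transP\<close>)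
  then show ?case by simp
qed

lemma int_le1: assumes x: "x \<in> space M" and f: "\<And>y. y \<in> space M \<Longrightarrow> f y \<le> 1"
  shows "(\<integral>\<^sup>+y. f y \<partial>transP M \<alpha> a x) \<le> emeasure (\<alpha> x) (E a)"
proof -
  have "(\<integral>\<^sup>+y. f y \<partial>transP M \<alpha> a x) \<le> (\<integral>\<^sup>+y. 1 \<partial>transP M \<alpha> a x)"
    by (rule nn_integral_mono) (use f in \<open>simp add: space_transP\<close>)
  then show ?thesis using transP_space[OF x] by simp
qed

lemma fin_le1: "x \<in> space M \<Longrightarrow> fin u x \<le> 1"
proof (induction u arbitrary: x)
  case Nil then show ?case using alpha_le1 by simp
next
  case (Cons a u) then show ?case using int_le1[of x "fin u" a] alpha_le1[of x "E a"] by simp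
qed

lemma cy_le1: "x \<in> space M \<Longrightarrow> cy u x \<le> 1"
proof (induction u arbitrary: x)
  case Nil then show ?case by simp
next
  case (Cons a u) then show ?case using int_le1[of x "cy u" a] alpha_le1[of x "E a"] by simp
qed

lemma fin_sum_le1: "x \<in> space M \<Longrightarrow> (\<Sum>u\<in>{u. length u < k}. fin u x) \<le> 1"
proof (induction k arbitrary: x)
  case 0 then show ?case by simp
next
  case (Suc k)
  have "(\<Sum>u\<in>{u. length u < Suc k}. fin u x) = fin [] x + (\<Sum>a\<in>UNIV. \<Sum>u\<in>{u. length u < k}. fin (a # u) x)"
    by (rule sum_len_less_Suc)
  also have "\<dots> = fin [] x + (\<Sum>a\<in>UNIV. \<integral>\<^sup>+y. (\<Sum>u\<in>{u. length u < k}. fin u y) \<partial>transP M \<alpha> a x)"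
    by (simp add: nn_integral_sum meas_transP fin_meas)
  also have "\<dots> \<le> fin [] x + (\<Sum>a\<in>UNIV. emeasure (\<alpha> x) (E a))"
    by (intro add_mono order_refl sum_mono int_le1 Suc)
  also have "\<dots> = emeasure (\<alpha> x) (space (\<alpha> x))" using decomp[OF Suc.prems] by simp
  also have "\<dots> \<le> 1" using alpha_le1[OF Suc.prems] .
  finally show ?case .
qed

lemma one_step: assumes t: "t \<in> {TOmega, TInf}"
  shows "x \<in> space M \<Longrightarrow> cy w x = fin w x + (\<Sum>a\<in>UNIV. cy (w @ [a]) x)"
proof (induction w arbitrary: x)
  case Nil
  have "emeasure (\<alpha> x) (space (\<alpha> x)) = 1" using alpha_prob[OF t Nil] prob_space.emeasure_space_1 by blast
  then show ?case using decomp[OF Nil] transP_space[OF Nil] by simp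
next
  case (Cons a w)
  have m1: "(\<lambda>y. \<Sum>b\<in>UNIV. cy (w@[b]) y) \<in> borel_measurable (transP M \<alpha> a x)"
    by (intro borel_measurable_sum meas_transP cy_meas)
  have "cy (a # w) x = (\<integral>\<^sup>+y. fin w y + (\<Sum>b\<in>UNIV. cy (w @ [b]) y) \<partial>transP M \<alpha> a x)"
    unfolding cy.simps by (rule nn_integral_cong, use Cons in \<open>simp add: space_transP\<close>)
  also have "(\<integral>\<^sup>+y. fin w y + (\<Sum>b\<in>UNIV. cy (w @ [b]) y) \<partial>transP M \<alpha> a x) = fin (a # w) x + (\<Sum>b\<in>UNIV. cy (a # w @ [b]) x)"
    by (simp add: nn_integral_add[OF meas_transP[OF fin_meas] m1] nn_integral_sum meas_transP cy_meas)
  finally show ?case by simp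
qed

lemma cy_expand: assumes t: "t \<in> {TOmega, TInf}" and x: "x \<in> space M"
  shows "cy w x = (\<Sum>z\<in>{z. length z = k}. cy (w @ z) x) + (\<Sum>z\<in>{z. length z < k}. fin (w @ z) x)"
proof (induction k arbitrary: w)
  case 0
  have "{z::'a list. length z = 0} = {[]}" by auto
  then show ?case by simp
next
  case (Suc k)
  have "cy w x = fin w x + (\<Sum>a\<in>UNIV. cy (w @ [a]) x)" by (rule one_step[OF t x])
  also have "\<dots> = fin w x + (\<Sum>a\<in>UNIV. (\<Sum>z\<in>{z. length z = k}. cy (w @ a # z) x) + (\<Sum>z\<in>{z. length z < k}. fin (w @ a # z) x))"
    by (intro arg_cong[where f="\<lambda>s. fin w x + s"] sum.cong refl) (subst Suc, simp)
  also have "\<dots> = (\<Sum>z\<in>{z. length z = Suc k}. cy (w @ z) x) + (\<Sum>z\<in>{z. length z < Suc k}. fin (w @ z) x)"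
    by (simp only: sum_len_Suc sum_len_less_Suc sum.distrib append_Nil2) (rule add.left_commute)
  finally show ?case .
qed

end




lemma stake_prefix: "length v \<le> n \<Longrightarrow> stake (length v) s = v \<Longrightarrow> prefix v (stake n s)"
proof -
  assume "length v \<le> n" "stake (length v) s = v"
  then have "stake n s = v @ stake (n - length v) (sdrop (length v) s)"
    using stake_add[of "length v" s "n - length v"] by simp
  then show ?thesis by (simp add: prefix_def)
qed

lemma stake_of_prefix: "prefix u v \<Longrightarrow> stake (length v) s = v \<Longrightarrow> stake (length u) s = u"
proof -
  assume p: "prefix u v" and s: "stake (length v) s = v"
  have "take (length u) (stake (length v) s) = stake (length u) s"
    using prefix_length_le[OF p] by (simp add: take_stake min_def)
  then show ?thesis using s p by (auto simp: prefix_def)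
qed

lemma wprefix_trans: "prefix u v \<Longrightarrow> wprefix v y \<Longrightarrow> wprefix u y"
  by (cases y) (auto simp: prefix_def stake_of_prefix[unfolded prefix_def])

lemma wprefix_cmp: "wprefix u y \<Longrightarrow> wprefix v y \<Longrightarrow> length u \<le> length v \<Longrightarrow> prefix u v"
proof (cases y)
  case (Inl l)
  assume "wprefix u y" "wprefix v y" "length u \<le> length v"
  then show ?thesis using Inl prefix_length_prefix[of u l v] by (auto simp: prefix_def)
next
  case (Inr s)
  assume a: "wprefix u y" "wprefix v y" "length u \<le> length v"
  then show ?thesis using stake_prefix[of u "length v" s] Inr by simp
qed

lemma wprefix_shift: "wprefix v (Inr (v @- s))"
  by (simp add: stake_shift)

lemma wprefix_Nil[simp]: "wprefix [] y"
  by (cases y) auto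

lemma cyl_Nil: "cyl t [] = words t"
  unfolding cyl_def by simp

lemma Inr_words: "t \<in> {TOmega, TInf} \<Longrightarrow> Inr s \<in> words t"
  by auto

lemma stream_in_cyl: "t \<in> {TOmega, TInf} \<Longrightarrow> Inr (v @- s) \<in> cyl t v"
  unfolding cyl_def using wprefix_shift by auto

lemma cyl_mono: "prefix u v \<Longrightarrow> cyl t v \<subseteq> cyl t u"
  unfolding cyl_def using wprefix_trans by blast

lemma cyl_sub_iff: "t \<in> {TOmega, TInf} \<Longrightarrow> length u \<le> length v \<Longrightarrow> cyl t v \<subseteq> cyl t u \<longleftrightarrow> prefix u v"
proof
  assume t: "t \<in> {TOmega, TInf}" and l: "length u \<le> length v" and "cyl t v \<subseteq> cyl t u"
  then have "Inr (v @- sconst undefined) \<in> cyl t u" using stream_in_cyl[OF t] by blast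
  then have "wprefix u (Inr (v @- sconst undefined))" by (simp only: cyl_def mem_Collect_eq)
  then show "prefix u v" by (rule wprefix_cmp[OF _ wprefix_shift l])
qed (rule cyl_mono)

lemma Inl_in_cyl: "Inl w \<in> cyl t v \<longleftrightarrow> Inl w \<in> words t \<and> prefix v w"
  by (auto simp: cyl_def prefix_def)

lemma cyl_not_single: "t \<in> {TOmega, TInf} \<Longrightarrow> cyl t v \<noteq> {Inl w}"
  using stream_in_cyl[of t v] by auto

lemma cyl_ne: "t \<in> {TOmega, TInf} \<Longrightarrow> cyl t v \<noteq> {}"
  using stream_in_cyl[of t v] by auto

lemma cyl_int: "y \<in> cyl t u \<Longrightarrow> y \<in> cyl t v \<Longrightarrow> length u \<le> length v \<Longrightarrow> cyl t u \<inter> cyl t v = cyl t v"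
  using wprefix_cmp[of u y v] cyl_mono[of u v t] by (auto simp: cyl_def)

lemma semiring_words: "s \<in> pts_semiring t \<Longrightarrow> s \<subseteq> words t"
  by (cases t) (auto simp: cyl_def)

lemma semiring_Int: assumes a: "a \<in> pts_semiring t" and b: "b \<in> pts_semiring t"
  shows "a \<inter> b \<in> pts_semiring t"
proof (cases "a \<inter> b = {}")
  case True then show ?thesis by (cases t) auto
next
  case False
  then obtain y where y: "y \<in> a" "y \<in> b" by auto
  show ?thesis
  proof (cases "\<exists>w. a = {Inl w}")
    case True then have "a \<inter> b = a" using y by auto
    then show ?thesis using a by simp
  next
    case na: False
    show ?thesis
    proof (cases "\<exists>w. b = {Inl w}")
      case True then have "a \<inter> b = b" using y by auto
      then show ?thesis using b by simp
    next
      case nb: False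
      from a na y obtain u where u: "a = cyl t u" "t \<in> {TOmega, TInf}" by (cases t) auto
      from b nb y obtain v where v: "b = cyl t v" by (cases t) auto
      show ?thesis
      proof (cases "length u \<le> length v")
        case True
        then have "a \<inter> b = b" using cyl_int[of y t u v] y u v by auto
        then show ?thesis using b by simp
      next
        case False
        then have "a \<inter> b = a" using cyl_int[of y t v u] y u v by auto
        then show ?thesis using a by simp
      qed
    qed
  qed
qed


definition Z :: "ptstype \<Rightarrow> nat \<Rightarrow> ('a::finite list \<times> bool) set" where
  "Z t n = (if t \<in> {TOmega, TInf} then (\<lambda>w. (w, False)) ` {w. length w = n} else {})
         \<union> (if t \<in> {TStar, TInf} then (\<lambda>w. (w, True)) ` {w. length w < n} else {})"

definition atom :: "ptstype \<Rightarrow> 'a list \<times> bool \<Rightarrow> 'a word set" where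
  "atom t z = (if snd z then {Inl (fst z)} else cyl t (fst z))"

definition lev :: "ptstype \<Rightarrow> nat \<Rightarrow> 'a word set \<Rightarrow> bool" where
  "lev t n s \<longleftrightarrow> s = {} \<or> (t \<in> {TStar, TInf} \<and> (\<exists>w. s = {Inl w} \<and> length w < n))
     \<or> (t \<in> {TOmega, TInf} \<and> (\<exists>w. s = cyl t w \<and> length w \<le> n))"

lemma finite_Z: "finite (Z t n)"
proof -
  have "finite {w::'a list. length w = n}" using finite_lists_length_eq[of "UNIV::'a set" n] by simp
  moreover have "finite {w::'a list. length w < n}"
  proof -
    have "{w::'a list. length w < n} \<subseteq> {u. set u \<subseteq> UNIV \<and> length u \<le> n}" by auto
    then show ?thesis using finite_lists_length_le[of "UNIV::'a set" n] finite_subset by auto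
  qed
  ultimately show ?thesis unfolding Z_def by auto
qed

lemma Z_cases: "z \<in> Z t n \<Longrightarrow> (\<And>w. z = (w, False) \<Longrightarrow> t \<in> {TOmega, TInf} \<Longrightarrow> length w = n \<Longrightarrow> P)
   \<Longrightarrow> (\<And>w. z = (w, True) \<Longrightarrow> t \<in> {TStar, TInf} \<Longrightarrow> length w < n \<Longrightarrow> P) \<Longrightarrow> P"
  unfolding Z_def by (auto split: if_splits)

lemma atom_ne: "z \<in> Z t n \<Longrightarrow> atom t z \<noteq> {}"
  by (erule Z_cases) (auto simp: atom_def cyl_ne)

lemma atom_semiring: "z \<in> Z t n \<Longrightarrow> atom t z \<in> pts_semiring t"
  by (erule Z_cases) (cases t, auto simp: atom_def)+

lemma atom_disj: assumes z: "z \<in> Z t n" and z': "z' \<in> Z t n" and ne: "atom t z \<inter> atom t z' \<noteq> {}"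
  shows "z = z'"
proof -
  from ne obtain y where y: "y \<in> atom t z" "y \<in> atom t z'" by auto
  show ?thesis
  proof (rule Z_cases[OF z]; rule Z_cases[OF z'])
    fix w w' assume *: "z = (w, False)" "length w = n" "z' = (w', False)" "length w' = n"
    then have "prefix w w'" using y wprefix_cmp[of w y w'] by (auto simp: atom_def cyl_def)
    then show ?thesis using * by (auto simp: prefix_def)
  next
    fix w w' assume *: "z = (w, False)" "length w = n" "z' = (w', True)" "length w' < n"
    then have "prefix w w'" using y by (auto simp: atom_def Inl_in_cyl)
    then show ?thesis using * prefix_length_le by fastforce
  next
    fix w w' assume *: "z = (w, True)" "length w < n" "z' = (w', False)" "length w' = n"
    then have "prefix w' w" using y by (auto simp: atom_def Inl_in_cyl)
    then show ?thesis using * prefix_length_le by fastforce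
  next
    fix w w' assume *: "z = (w, True)" "z' = (w', True)"
    then show ?thesis using y by (auto simp: atom_def)
  qed
qed

lemma lev_sub: assumes l: "lev t n s" and z: "z \<in> Z t n" and ne: "atom t z \<inter> s \<noteq> {}"
  shows "atom t z \<subseteq> s"
proof -
  from ne obtain y where y: "y \<in> atom t z" "y \<in> s" by auto
  from l y consider (S) w where "s = {Inl w}" "length w < n" | (C) w where "s = cyl t w" "length w \<le> n"
    unfolding lev_def by auto
  then show ?thesis
  proof cases
    case S
    show ?thesis
    proof (rule Z_cases[OF z])
      fix v assume *: "z = (v, False)" "length v = n"
      then have "prefix v w" using y S by (auto simp: atom_def Inl_in_cyl)
      then show ?thesis using * S prefix_length_le by fastforce
    next
      fix v assume *: "z = (v, True)"
      then show ?thesis using y S by (auto simp: atom_def)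
    qed
  next
    case C
    show ?thesis
    proof (rule Z_cases[OF z])
      fix v assume *: "z = (v, False)" "length v = n"
      then have "prefix w v" using y C wprefix_cmp[of w y v] by (auto simp: atom_def cyl_def)
      then show ?thesis using * C cyl_mono by (auto simp: atom_def)
    next
      fix v assume *: "z = (v, True)"
      then show ?thesis using y C by (auto simp: atom_def)
    qed
  qed
qed

lemma lev_cover: assumes l: "lev t n s" and y: "y \<in> s"
  shows "\<exists>z\<in>Z t n. y \<in> atom t z"
proof -
  from l y consider (S) w where "s = {Inl w}" "length w < n" "t \<in> {TStar, TInf}"
    | (C) w where "s = cyl t w" "length w \<le> n" "t \<in> {TOmega, TInf}"
    unfolding lev_def by auto
  then show ?thesis
  proof cases
    case S
    then show ?thesis using y by (intro bexI[of _ "(w, True)"]) (auto simp: atom_def Z_def)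
  next
    case C
    show ?thesis
    proof (cases y)
      case (Inl v)
      show ?thesis
      proof (cases "length v < n")
        case True
        have "t = TInf" using C y Inl by (auto simp: cyl_def)
        then show ?thesis using True Inl by (intro bexI[of _ "(v, True)"]) (auto simp: atom_def Z_def)
      next
        case False
        have "y \<in> words t" using C y by (auto simp: cyl_def)
        moreover have "wprefix (take n v) y" using Inl by (metis wprefix.simps(1) append_take_drop_id)
        ultimately show ?thesis using False C
          by (intro bexI[of _ "(take n v, False)"]) (auto simp: atom_def Z_def cyl_def)
      qed
    next
      case (Inr st)
      have "y \<in> words t" using C y by (auto simp: cyl_def)
      moreover have "wprefix (stake n st) y" using Inr by simp
      ultimately show ?thesis using C
        by (intro bexI[of _ "(stake n st, False)"]) (auto simp: atom_def Z_def cyl_def)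
    qed
  qed
qed

lemma lev_exists: assumes "s \<in> pts_semiring t" shows "\<exists>n. lev t n s"
proof -
  have "s = {} \<or> (t \<in> {TStar, TInf} \<and> (\<exists>w. s = {Inl w})) \<or> (t \<in> {TOmega, TInf} \<and> (\<exists>w. s = cyl t w))"
    using assms by (cases t) auto
  then show ?thesis
  proof (elim disjE conjE exE)
    assume "s = {}" then show ?thesis unfolding lev_def by blast
  next
    fix w assume "t \<in> {TStar, TInf}" "s = {Inl w}"
    then have "lev t (Suc (length w)) s" unfolding lev_def by blast
    then show ?thesis ..
  next
    fix w assume "t \<in> {TOmega, TInf}" "s = cyl t w"
    then have "lev t (length w) s" unfolding lev_def by blast
    then show ?thesis ..
  qed
qed

lemma lev_mono: "lev t n s \<Longrightarrow> n \<le> m \<Longrightarrow> lev t m s"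
  unfolding lev_def by force

lemma lev_in: "lev t n s \<Longrightarrow> s \<in> pts_semiring t"
  unfolding lev_def by (cases t) auto

lemma semiring_of: "semiring_of_sets (words t) (pts_semiring t :: 'a::finite word set set)"
proof
  show "pts_semiring t \<subseteq> Pow (words t)" using semiring_words by auto
  show "{} \<in> pts_semiring t" by (cases t) auto
  fix a b :: "'a word set" assume a: "a \<in> pts_semiring t" and b: "b \<in> pts_semiring t"
  show "a \<inter> b \<in> pts_semiring t" by (rule semiring_Int[OF a b])
  obtain na nb where "lev t na a" "lev t nb b" using lev_exists a b by blast
  then have la: "lev t (max na nb) a" and lb: "lev t (max na nb) b" using lev_mono[of t na a] lev_mono[of t nb b] by auto
  define n where "n = max na nb"
  define Cs where "Cs = atom t ` {z \<in> Z t n. atom t z \<subseteq> a \<and> atom t z \<inter> b = {}}"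
  have "Cs \<subseteq> pts_semiring t" unfolding Cs_def using atom_semiring by auto
  moreover have "finite Cs" unfolding Cs_def
    by (rule finite_imageI, rule finite_subset[OF _ finite_Z[of t n]]) auto
  moreover have "disjoint Cs"
    unfolding Cs_def disjoint_def using atom_disj by blast
  moreover have "a - b = \<Union>Cs"
  proof
    show "a - b \<subseteq> \<Union>Cs"
    proof
      fix y assume y: "y \<in> a - b"
      then obtain z where z: "z \<in> Z t n" "y \<in> atom t z" using lev_cover[OF la[folded n_def]] by blast
      then have "atom t z \<subseteq> a" using lev_sub[OF la[folded n_def]] y by blast
      moreover have "atom t z \<inter> b = {}" using lev_sub[OF lb[folded n_def] z(1)] y z by blast
      ultimately show "y \<in> \<Union>Cs" using z unfolding Cs_def by blast
    qed
  qed (auto simp: Cs_def)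
  ultimately show "\<exists>C\<subseteq>pts_semiring t. finite C \<and> disjoint C \<and> a - b = \<Union>C" by blast
qed


lemma konig:
  fixes u :: "'a::finite list" and V :: "'a list set"
  assumes cover: "\<And>s. stake (length u) s = u \<Longrightarrow> \<exists>v\<in>V. stake (length v) s = v"
  shows "\<exists>N. \<forall>z. length z = N \<longrightarrow> (\<exists>v\<in>V. prefix v (u @ z))"
proof (rule ccontr)
  define bad where "bad w \<longleftrightarrow> (\<forall>k. \<exists>z. length z = k \<and> (\<forall>v\<in>V. \<not> prefix v (w @ z)))" for w
  assume "\<not> ?thesis"
  then have b0: "bad u" unfolding bad_def by blast
  have step: "\<exists>a. bad (w @ [a])" if bw: "bad w" for w
  proof (rule ccontr)
    assume nb: "\<not> (\<exists>a. bad (w @ [a]))"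
    have "\<forall>a. \<exists>k. \<forall>z. length z = k \<longrightarrow> (\<exists>v\<in>V. prefix v (w @ a # z))"
      using nb unfolding bad_def by auto
    then obtain kf where kf: "\<And>a z. length z = kf a \<Longrightarrow> \<exists>v\<in>V. prefix v (w @ a # z)" by metis
    define K where "K = Max (range kf)"
    have kK: "kf a \<le> K" for a unfolding K_def by (rule Max_ge) auto
    from bw obtain z where z: "length z = Suc K" "\<forall>v\<in>V. \<not> prefix v (w @ z)" unfolding bad_def by blast
    then obtain a z' where az: "z = a # z'" "length z' = K" by (cases z) auto
    have "length (take (kf a) z') = kf a" using kK[of a] az by simp
    then obtain v where v: "v \<in> V" "prefix v (w @ a # take (kf a) z')" using kf by blast
    have "prefix (w @ a # take (kf a) z') (w @ z)" using az take_is_prefix[of "kf a" z'] by simp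
    then have "prefix v (w @ z)" using v prefix_order.trans by blast
    then show False using z v by blast
  qed
  define nxt where "nxt w = (SOME a. bad (w @ [a]))" for w
  define pre where "pre = rec_nat u (\<lambda>_ w. w @ [nxt w])"
  have pre0: "pre 0 = u" and preS: "pre (Suc n) = pre n @ [nxt (pre n)]" for n by (simp_all add: pre_def)
  have bp: "bad (pre n)" for n
  proof (induction n)
    case 0 then show ?case using b0 pre0 by simp
  next
    case (Suc n)
    then have "bad (pre n @ [nxt (pre n)])" unfolding nxt_def using step someI_ex by metis
    then show ?case using preS by simp
  qed
  define s where "s = u @- smap (\<lambda>n. nxt (pre n)) nats"
  have sp: "stake (length u + n) s = pre n" for n
  proof (induction n)
    case 0 then show ?case by (simp add: s_def pre0 stake_shift)
  next
    case (Suc n)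
    have "stake (length u + Suc n) s = stake (length u + n) s @ [s !! (length u + n)]"
      by (simp add: stake_Suc[symmetric])
    also have "s !! (length u + n) = nxt (pre n)" by (simp add: s_def)
    finally show ?case using Suc preS by simp
  qed
  have "stake (length u) s = u" using sp[of 0] pre0 by simp
  then obtain v where v: "v \<in> V" "stake (length v) s = v" using cover by blast
  then have "prefix v (stake (length u + length v) s)" by (intro stake_prefix) auto
  then have "prefix v (pre (length v) @ [])" using sp by simp
  then show False using bp[of "length v"] v unfolding bad_def by blast
qed


lemma semiring_cases: "s \<in> pts_semiring t \<Longrightarrow> s = {} \<or> (t \<in> {TStar, TInf} \<and> (\<exists>w. s = {Inl w})) \<or> (t \<in> {TOmega, TInf} \<and> (\<exists>w. s = cyl t w))"
  by (cases t) auto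

lemma prefix_stake: "prefix v (stake n st) \<Longrightarrow> stake (length v) st = v"
proof -
  assume p: "prefix v (stake n st)"
  then have "length v \<le> n" using prefix_length_le by fastforce
  moreover have "take (length v) (stake n st) = v" using p by (auto simp: prefix_def)
  ultimately show ?thesis by (simp add: take_stake min_def)
qed

lemma fam_lev:
  fixes A :: "nat \<Rightarrow> 'a::finite word set"
  assumes A: "range A \<subseteq> pts_semiring t" and dj: "disjoint_family A" and U: "(\<Union>i. A i) = B"
    and B: "B \<in> pts_semiring t"
  shows "\<exists>n. \<forall>i. lev t n (A i)"
proof -
  have sub: "A i \<subseteq> B" for i using U by auto
  have Bw: "B \<subseteq> words t" using semiring_words[OF B] .
  have same: "i = j" if "y \<in> A i" "y \<in> A j" for i j y
    using dj that unfolding disjoint_family_on_def by blast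
  from semiring_cases[OF B] consider (E) "B = {}" | (S) w0 where "B = {Inl w0}" | (C) u where "t \<in> {TOmega, TInf}" "B = cyl t u"
    by blast
  then show ?thesis
  proof cases
    case E
    then have "lev t 0 (A i)" for i using sub[of i] by (auto simp: lev_def)
    then show ?thesis by blast
  next
    case S
    have "lev t (Suc (length w0)) (A i)" for i
    proof -
      have Ai: "A i \<in> pts_semiring t" using A by auto
      from semiring_cases[OF Ai] consider "A i = {}" | "t \<in> {TStar, TInf}" "\<exists>w. A i = {Inl w}"
        | v where "t \<in> {TOmega, TInf}" "A i = cyl t v" by blast
      then show ?thesis
      proof cases
        case 3
        then show ?thesis using stream_in_cyl[OF 3(1), of v "sconst undefined"] sub[of i] S by auto
      qed (use sub[of i] S in \<open>auto simp: lev_def\<close>)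
    qed
    then show ?thesis by blast
  next
    case C
    define V where "V = {v. \<exists>i. A i = cyl t v}"
    have cover: "\<exists>v\<in>V. stake (length v) st = v" if st: "stake (length u) st = u" for st
    proof -
      have "Inr st \<in> B" using C st Inr_words[OF C(1)] by (simp add: cyl_def)
      then obtain i where i: "Inr st \<in> A i" using U by auto
      have Ai: "A i \<in> pts_semiring t" using A by auto
      from semiring_cases[OF Ai] i obtain v where "A i = cyl t v" by auto
      then show ?thesis using i unfolding V_def by (auto simp: cyl_def)
    qed
    obtain N where N: "\<And>z. length z = N \<Longrightarrow> \<exists>v\<in>V. prefix v (u @ z)"
      using konig[of u V, OF cover] by blast
    define n where "n = length u + N"
    have "lev t n (A i)" for i
    proof -
      have Ai: "A i \<in> pts_semiring t" using A by auto
      from semiring_cases[OF Ai] consider (E) "A i = {}" | (S) w where "t \<in> {TStar, TInf}" "A i = {Inl w}"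
        | (Cy) v0 where "A i = cyl t v0" by blast
      then show ?thesis
      proof cases
        case E then show ?thesis by (simp add: lev_def)
      next
        case S
        have wB: "Inl w \<in> B" using S sub[of i] by auto
        then have pu: "prefix u w" and ww: "Inl w \<in> words t" using C by (simp_all add: Inl_in_cyl)
        have "length w < n"
        proof (rule ccontr)
          assume "\<not> length w < n"
          then have len: "length (take N (drop (length u) w)) = N" using pu n_def by auto
          from N[OF len] obtain v where v: "v \<in> V" "prefix v (u @ take N (drop (length u) w))" by blast
          have "prefix (u @ take N (drop (length u) w)) w"
            using pu take_is_prefix[of N "drop (length u) w"] by (auto simp: prefix_def)
          then have "prefix v w" using v prefix_order.trans by blast
          moreover obtain j where j: "A j = cyl t v" using v unfolding V_def by auto
          ultimately have "Inl w \<in> A j" using ww by (simp add: Inl_in_cyl)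
          then have "i = j" using same[of "Inl w" i j] S by auto
          then show False using j S cyl_not_single[OF C(1)] by metis
        qed
        then show ?thesis using S by (auto simp: lev_def)
      next
        case Cy
        define st :: "'a stream" where "st = v0 @- sconst undefined"
        have y0: "Inr st \<in> A i" using Cy stream_in_cyl[OF C(1)] st_def by simp
        then have "Inr st \<in> B" using sub by blast
        then have su: "stake (length u) st = u" using C by (simp add: cyl_def)
        define w' where "w' = stake n st"
        have "prefix u w'" unfolding w'_def n_def by (rule stake_prefix) (use su in auto)
        then have uz: "u @ drop (length u) w' = w'" and lz: "length (drop (length u) w') = N"
          by (auto simp: prefix_def w'_def n_def)
        from N[OF lz] obtain v where v: "v \<in> V" "prefix v w'" using uz by auto
        have sv: "stake (length v) st = v" using v(2) unfolding w'_def by (rule prefix_stake)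
        have lv: "length v \<le> n" using v(2) prefix_length_le unfolding w'_def by fastforce
        obtain j where j: "A j = cyl t v" using v unfolding V_def by auto
        have "Inr st \<in> A j" using j sv Inr_words[OF C(1)] by (simp add: cyl_def)
        then have "i = j" using same y0 by blast
        then show ?thesis using j lv C by (auto simp: lev_def)
      qed
    qed
    then show ?thesis by blast
  qed
qed




lemma sum_prefix:
  fixes w :: "'a list"
  assumes fin: "finite {v::'a list. P (length v)}"
  shows "(\<Sum>v\<in>{v. P (length v)}. if prefix w v then g v else 0) = (\<Sum>z\<in>{z. P (length w + length z)}. g (w @ z))"
proof -
  have "(\<Sum>v\<in>{v. P (length v)}. if prefix w v then g v else 0) = (\<Sum>v\<in>{v \<in> {v. P (length v)}. prefix w v}. g v)"
    by (rule sum.inter_filter[symmetric, OF fin])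
  also have "{v \<in> {v. P (length v)}. prefix w v} = (\<lambda>z. w @ z) ` {z. P (length w + length z)}"
    by (auto simp: prefix_def)
  also have "sum g \<dots> = (\<Sum>z\<in>{z. P (length w + length z)}. g (w @ z))"
    by (rule sum.reindex_cong[where l="\<lambda>z. w @ z"]) (auto simp: inj_on_def)
  finally show ?thesis .
qed

context ptsl
begin

definition val :: "'x \<Rightarrow> 'a list \<times> bool \<Rightarrow> ennreal" where
  "val x z = (if snd z then fin (fst z) x else cy (fst z) x)"

lemma val_simps[simp]: "val x (w, False) = cy w x" "val x (w, True) = fin w x"
  by (simp_all add: val_def)

lemma cy_atoms: assumes t: "t \<in> {TOmega, TInf}" and x: "x \<in> space M" and w: "length w \<le> n"
  shows "cy w x = (\<Sum>z\<in>Z t n. if atom t z \<subseteq> cyl t w then val x z else 0)"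
proof -
  define k where "k = n - length w"
  define ZF where "ZF = (\<lambda>v. (v, False)) ` {v::'a list. length v = n}"
  define ZT where "ZT = (if t = TInf then (\<lambda>v. (v, True)) ` {v::'a list. length v < n} else {})"
  have Zeq: "Z t n = ZF \<union> ZT" using t unfolding Z_def ZF_def ZT_def by auto
  have fZF: "finite ZF" unfolding ZF_def using finite_len_eq by auto
  have fZT: "finite ZT" unfolding ZT_def using finite_len_less by auto
  have dj: "ZF \<inter> ZT = {}" unfolding ZF_def ZT_def by auto
  let ?g = "\<lambda>z. if atom t z \<subseteq> cyl t w then val x z else 0"
  have "sum ?g ZF = (\<Sum>v\<in>{v. length v = n}. ?g (v, False))"
    unfolding ZF_def by (subst sum.reindex) (auto simp: inj_on_def)
  also have "\<dots> = (\<Sum>v\<in>{v. length v = n}. if cyl t v \<subseteq> cyl t w then cy v x else 0)"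
    by (rule sum.cong) (simp_all add: atom_def)
  also have "\<dots> = (\<Sum>v\<in>{v. length v = n}. if prefix w v then cy v x else 0)"
    by (rule sum.cong) (use cyl_sub_iff[OF t] w in auto)
  also have "\<dots> = (\<Sum>z\<in>{z. length w + length z = n}. cy (w @ z) x)"
    by (rule sum_prefix) (rule finite_len_eq)
  also have "{z. length w + length z = n} = {z::'a list. length z = k}" using w k_def by auto
  finally have 1: "sum ?g ZF = (\<Sum>z\<in>{z. length z = k}. cy (w @ z) x)" .
  have 2: "sum ?g ZT = (\<Sum>z\<in>{z. length z < k}. fin (w @ z) x)"
  proof (cases "t = TInf")
    case True
    have "sum ?g ZT = (\<Sum>v\<in>{v. length v < n}. ?g (v, True))"
    proof -
      have "ZT = (\<lambda>v. (v, True)) ` {v. length v < n}" using True ZT_def by simp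
      then show ?thesis by (simp only:) (subst sum.reindex, auto simp: inj_on_def)
    qed
    also have "\<dots> = (\<Sum>v\<in>{v. length v < n}. if {Inl v} \<subseteq> cyl t w then fin v x else 0)"
      by (rule sum.cong) (simp_all add: atom_def)
    also have "\<dots> = (\<Sum>v\<in>{v. length v < n}. if prefix w v then fin v x else 0)"
      by (rule sum.cong) (use True in \<open>auto simp: Inl_in_cyl\<close>)
    also have "\<dots> = (\<Sum>z\<in>{z. length w + length z < n}. fin (w @ z) x)"
      by (rule sum_prefix) (rule finite_len_less)
    also have "{z. length w + length z < n} = {z::'a list. length z < k}" using w k_def by auto
    finally show ?thesis .
  next
    case False
    then have "t \<notin> {TStar, TInf}" using t by auto
    then show ?thesis using False fin_zero[OF _ x] by (simp add: ZT_def)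
  qed
  have "(\<Sum>z\<in>Z t n. ?g z) = sum ?g ZF + sum ?g ZT"
    unfolding Zeq by (rule sum.union_disjoint[OF fZF fZT dj])
  then show ?thesis using 1 2 cy_expand[OF t x, of w k] by simp
qed

lemma tr_fin: assumes tr: "trace_eqs t M \<alpha> tr" and t: "t \<in> {TStar, TInf}"
  shows "x \<in> space M \<Longrightarrow> tr x {Inl u} = fin u x"
proof (induction u arbitrary: x)
  case Nil then show ?case unfolding fin.simps using tr t unfolding trace_eqs_def by blast
next
  case (Cons a u)
  have "tr x {Inl (a # u)} = (\<integral>\<^sup>+ x'. tr x' {Inl u} \<partial>transP M \<alpha> a x)"
    using tr t Cons.prems unfolding trace_eqs_def by blast
  also have "\<dots> = fin (a # u) x"
    unfolding fin.simps by (rule nn_integral_cong) (use Cons.IH in \<open>simp add: space_transP\<close>)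
  finally show ?case .
qed

lemma tr_cy: assumes tr: "trace_eqs t M \<alpha> tr" and t: "t \<in> {TOmega, TInf}"
  shows "x \<in> space M \<Longrightarrow> tr x (cyl t u) = cy u x"
proof (induction u arbitrary: x)
  case Nil then show ?case unfolding cy.simps using tr t unfolding trace_eqs_def by blast
next
  case (Cons a u)
  have "tr x (cyl t (a # u)) = (\<integral>\<^sup>+ x'. tr x' (cyl t u) \<partial>transP M \<alpha> a x)"
    using tr t Cons.prems unfolding trace_eqs_def by blast
  also have "\<dots> = cy (a # u) x"
    unfolding cy.simps by (rule nn_integral_cong) (use Cons.IH in \<open>simp add: space_transP\<close>)
  finally show ?case .
qed

lemma tr_empty: "trace_eqs t M \<alpha> tr \<Longrightarrow> x \<in> space M \<Longrightarrow> tr x {} = 0"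
  unfolding trace_eqs_def by simp

lemma tr_atoms: assumes tr: "trace_eqs t M \<alpha> tr" and x: "x \<in> space M" and l: "lev t n s"
  shows "tr x s = (\<Sum>z\<in>Z t n. if atom t z \<subseteq> s then val x z else 0)"
proof -
  from l consider (E) "s = {}" | (S) w where "t \<in> {TStar, TInf}" "s = {Inl w}" "length w < n"
    | (C) w where "t \<in> {TOmega, TInf}" "s = cyl t w" "length w \<le> n"
    unfolding lev_def by blast
  then show ?thesis
  proof cases
    case E
    have "(\<Sum>z\<in>Z t n. if atom t z \<subseteq> s then val x z else 0) = 0"
      by (rule sum.neutral) (use E atom_ne in auto)
    then show ?thesis using E tr_empty[OF tr x] by simp
  next
    case S
    have "(\<Sum>z\<in>Z t n. if atom t z \<subseteq> s then val x z else 0) = (\<Sum>z\<in>Z t n. if z = (w, True) then val x z else 0)"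
    proof (rule sum.cong[OF refl])
      fix z :: "'a list \<times> bool" assume z: "z \<in> Z t n"
      have "atom t z \<subseteq> s \<longleftrightarrow> z = (w, True)"
      proof (rule Z_cases[OF z])
        fix v assume "z = (v, False)" "t \<in> {TOmega, TInf}" "length v = n"
        then show ?thesis using S cyl_not_single[of t v w] atom_ne[OF z]
          by (auto simp: atom_def subset_singleton_iff)
      next
        fix v assume "z = (v, True)"
        then show ?thesis using S by (auto simp: atom_def)
      qed
      then show "(if atom t z \<subseteq> s then val x z else 0) = (if z = (w, True) then val x z else 0)" by simp
    qed
    also have "\<dots> = val x (w, True)"
    proof -
      have mem: "(w, True) \<in> Z t n" using S by (auto simp: Z_def)
      show ?thesis by (simp only: sum.delta[OF finite_Z] mem if_True)
    qed
    finally show ?thesis using S tr_fin[OF tr _ x] by simp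
  next
    case C
    then show ?thesis using tr_cy[OF tr C(1) x] cy_atoms[OF C(1) x C(3)] by simp
  qed
qed


lemma tr_ca: assumes tr: "trace_eqs t M \<alpha> tr" and x: "x \<in> space M"
  shows "countably_additive (pts_semiring t) (tr x)"
  unfolding countably_additive_def
proof (intro allI impI)
  fix A :: "nat \<Rightarrow> 'a word set"
  assume A: "range A \<subseteq> pts_semiring t" and dj: "disjoint_family A" and B: "(\<Union>i. A i) \<in> pts_semiring t"
  define B where "B = (\<Union>i. A i)"
  obtain n1 where n1: "\<And>i. lev t n1 (A i)" using fam_lev[OF A dj B_def[symmetric]] B B_def by blast
  obtain n2 where n2: "lev t n2 B" using lev_exists B B_def by blast
  define n where "n = max n1 n2"
  have la: "lev t n (A i)" for i using lev_mono[OF n1] n_def by simp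
  have lB: "lev t n B" using lev_mono[OF n2] n_def by simp
  define I where "I = {i. A i \<noteq> {}}"
  have ex: "\<exists>z\<in>Z t n. atom t z \<subseteq> A i" if "i \<in> I" for i
  proof -
    from that obtain y where y: "y \<in> A i" unfolding I_def by auto
    from lev_cover[OF la y] obtain z where z: "z \<in> Z t n" "y \<in> atom t z" by blast
    then show ?thesis using lev_sub[OF la z(1)] y by blast
  qed
  define f where "f i = (SOME z. z \<in> Z t n \<and> atom t z \<subseteq> A i)" for i
  have f: "f i \<in> Z t n \<and> atom t (f i) \<subseteq> A i" if "i \<in> I" for i
    unfolding f_def using someI_ex[OF ex[OF that, unfolded Bex_def]] .
  have "inj_on f I"
  proof (rule inj_onI)
    fix i j assume i: "i \<in> I" and j: "j \<in> I" and eq: "f i = f j"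
    obtain y where "y \<in> atom t (f i)" using atom_ne f[OF i] by blast
    then have "y \<in> A i" "y \<in> A j" using f[OF i] f[OF j] eq by auto
    then show "i = j" using dj unfolding disjoint_family_on_def by blast
  qed
  moreover have "f ` I \<subseteq> Z t n" using f by auto
  ultimately have finI: "finite I" using finite_Z by (meson finite_subset inj_on_finite)
  have "(\<Sum>i. tr x (A i)) = (\<Sum>i\<in>I. tr x (A i))"
    by (rule suminf_finite[OF finI]) (auto simp: I_def tr_empty[OF tr x])
  also have "\<dots> = (\<Sum>i\<in>I. \<Sum>z\<in>Z t n. if atom t z \<subseteq> A i then val x z else 0)"
    using tr_atoms[OF tr x la] by simp
  also have "\<dots> = (\<Sum>z\<in>Z t n. \<Sum>i\<in>I. if atom t z \<subseteq> A i then val x z else 0)"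
    by (rule sum.swap)
  also have "\<dots> = (\<Sum>z\<in>Z t n. if atom t z \<subseteq> B then val x z else 0)"
  proof (rule sum.cong[OF refl])
    fix z :: "'a list \<times> bool" assume z: "z \<in> Z t n"
    show "(\<Sum>i\<in>I. if atom t z \<subseteq> A i then val x z else 0) = (if atom t z \<subseteq> B then val x z else 0)"
    proof (cases "atom t z \<subseteq> B")
      case True
      obtain y where y: "y \<in> atom t z" using atom_ne[OF z] by blast
      then obtain i0 where "y \<in> A i0" using True B_def by auto
      then have i0: "atom t z \<subseteq> A i0" using lev_sub[OF la z] y by blast
      then have i0I: "i0 \<in> I" using y I_def by auto
      have uniq: "i = i0" if "atom t z \<subseteq> A i" for i
        using that i0 y dj unfolding disjoint_family_on_def by blast
      have "{i \<in> I. atom t z \<subseteq> A i} = {i0}" using i0 i0I uniq by blast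
      then have "(\<Sum>i\<in>I. if atom t z \<subseteq> A i then val x z else 0) = (\<Sum>i\<in>{i0}. val x z)"
        using sum.inter_filter[OF finI, of "\<lambda>_. val x z" "\<lambda>i. atom t z \<subseteq> A i"] by simp
      then show ?thesis using True by simp
    next
      case False
      then have "\<not> atom t z \<subseteq> A i" for i using B_def by auto
      then show ?thesis using False by simp
    qed
  qed
  also have "\<dots> = tr x B" using tr_atoms[OF tr x lB] by simp
  finally show "(\<Sum>i. tr x (A i)) = tr x (\<Union>i. A i)" unfolding B_def .
qed

lemma cy_name: assumes t: "t \<in> {TOmega, TInf}" and x: "x \<in> space M" and eq: "cyl t u = cyl t v"
  shows "cy u x = cy v x"
  using cy_atoms[OF t x, of u "max (length u) (length v)"] cy_atoms[OF t x, of v "max (length u) (length v)"] eq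
  by simp

definition tr0 :: "'x \<Rightarrow> 'a word set \<Rightarrow> ennreal" where
  "tr0 x S = (if \<exists>u. S = {Inl u} then fin (SOME u. S = {Inl u}) x
     else if t \<in> {TOmega, TInf} \<and> (\<exists>u. S = cyl t u) then cy (SOME u. S = cyl t u) x else 0)"

lemma tr0_single: "tr0 x {Inl u} = fin u x"
  unfolding tr0_def by simp

lemma tr0_cyl: assumes t: "t \<in> {TOmega, TInf}" and x: "x \<in> space M" shows "tr0 x (cyl t u) = cy u x"
proof -
  have ns: "\<not> (\<exists>w. cyl t u = {Inl w})" using cyl_not_single[OF t] by blast
  have sv: "cyl t (SOME v. cyl t u = cyl t v) = cyl t u"
    using someI_ex[of "\<lambda>v. cyl t u = cyl t v"] by blast
  have c: "t \<in> {TOmega, TInf} \<and> (\<exists>v. cyl t u = cyl t v)" using t by blast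
  have "tr0 x (cyl t u) = cy (SOME v. cyl t u = cyl t v) x"
    unfolding tr0_def by (subst if_not_P[OF ns], subst if_P[OF c], rule refl)
  also have "\<dots> = cy u x" by (rule cy_name[OF t x sv])
  finally show ?thesis .
qed

lemma tr0_empty: "tr0 x {} = 0"
  unfolding tr0_def using cyl_ne by auto

lemma tr0_eqs: "trace_eqs t M \<alpha> tr0"
  unfolding trace_eqs_def
proof (intro ballI conjI impI allI)
  fix x assume x: "x \<in> space M"
  show "tr0 x {} = 0" by (rule tr0_empty)
  show "tr0 x {Inl []} = emeasure (\<alpha> x) {None}" by (simp add: tr0_single)
  fix a u
  show "tr0 x {Inl (a # u)} = (\<integral>\<^sup>+ x'. tr0 x' {Inl u} \<partial>transP M \<alpha> a x)"
    by (simp add: tr0_single)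
next
  fix x assume x: "x \<in> space M" and t: "t \<in> {TOmega, TInf}"
  show "tr0 x (cyl t []) = 1" using tr0_cyl[OF t x] by simp
  fix a u
  have "tr0 x (cyl t (a # u)) = cy (a # u) x" by (rule tr0_cyl[OF t x])
  also have "\<dots> = (\<integral>\<^sup>+ x'. tr0 x' (cyl t u) \<partial>transP M \<alpha> a x)"
    unfolding cy.simps by (rule nn_integral_cong) (simp add: space_transP tr0_cyl[OF t])
  finally show "tr0 x (cyl t (a # u)) = (\<integral>\<^sup>+ x'. tr0 x' (cyl t u) \<partial>transP M \<alpha> a x)" .
qed

lemma tr_le1: assumes tr: "trace_eqs t M \<alpha> tr" and x: "x \<in> space M" and S: "S \<in> pts_semiring t"
  shows "tr x S \<le> 1"
  using semiring_cases[OF S] tr_empty[OF tr x] tr_fin[OF tr _ x] tr_cy[OF tr _ x] fin_le1[OF x] cy_le1[OF x]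
  by auto

lemma tr_unique: assumes tr: "trace_eqs t M \<alpha> tr" and tr': "trace_eqs t M \<alpha> tr'" and x: "x \<in> space M"
  and S: "S \<in> pts_semiring t"
  shows "tr x S = tr' x S"
  using semiring_cases[OF S] tr_empty[OF tr x] tr_fin[OF tr _ x] tr_cy[OF tr _ x]
    tr_empty[OF tr' x] tr_fin[OF tr' _ x] tr_cy[OF tr' _ x]
  by auto

end




lemma le1_fin: "(a::ennreal) \<le> 1 \<Longrightarrow> a \<noteq> \<infinity>"
  by (auto simp: top_unique)

context ptsl
begin

lemma tr_sf: assumes tr: "trace_eqs t M \<alpha> tr" and x: "x \<in> space M"
  shows "sigma_finite_on (words t) (pts_semiring t) (tr x)"
  unfolding sigma_finite_on_def
proof -
  have fin: "tr x S \<noteq> \<infinity>" if "S \<in> pts_semiring t" for S using tr_le1[OF tr x that] le1_fin by blast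
  show "\<exists>A::nat \<Rightarrow> 'a word set. range A \<subseteq> pts_semiring t \<and> \<Union> (range A) = words t \<and> (\<forall>i. tr x (A i) \<noteq> \<infinity>)"
  proof (cases t)
    case T0
    then show ?thesis by (intro exI[of _ "\<lambda>_. {}"]) (simp add: tr_empty[OF tr x])
  next
    case TStar
    define A :: "nat \<Rightarrow> 'a word set" where "A i = {Inl (from_nat i)}" for i
    have r: "range A \<subseteq> pts_semiring t" using TStar by (auto simp: A_def)
    moreover have "\<Union> (range A) = words t"
    proof
      show "\<Union> (range A) \<subseteq> words t" using TStar by (auto simp: A_def)
      show "words t \<subseteq> \<Union> (range A)"
      proof
        fix y :: "'a word" assume "y \<in> words t"
        then obtain u where "y = Inl u" using TStar by auto
        then have "y \<in> A (to_nat u)" by (simp add: A_def)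
        then show "y \<in> \<Union> (range A)" by blast
      qed
    qed
    moreover have "\<forall>i. tr x (A i) \<noteq> \<infinity>" using r fin by (meson range_subsetD)
    ultimately show ?thesis by (intro exI[of _ A] conjI)
  next
    case TOmega
    have c: "cyl t [] \<in> pts_semiring t" using TOmega by simp
    then have f: "tr x (cyl t []) \<noteq> \<infinity>" by (rule fin)
    show ?thesis using c f by (intro exI[of _ "\<lambda>_. cyl t []"]) (simp add: cyl_Nil)
  next
    case TInf
    have c: "cyl t [] \<in> pts_semiring t" using TInf by simp
    then have f: "tr x (cyl t []) \<noteq> \<infinity>" by (rule fin)
    show ?thesis using c f by (intro exI[of _ "\<lambda>_. cyl t []"]) (simp add: cyl_Nil)
  qed
qed

definition goodN :: "('x \<Rightarrow> 'a word set \<Rightarrow> ennreal) \<Rightarrow> 'x \<Rightarrow> 'a word measure \<Rightarrow> bool" where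
  "goodN tr x N \<longleftrightarrow> space N = words t \<and> sets N = sigma_sets (words t) (pts_semiring t)
               \<and> (\<forall>S\<in>pts_semiring t. emeasure N S = tr x S)"

lemma N_unique: assumes tr: "trace_eqs t M \<alpha> tr" and x: "x \<in> space M"
  and N1: "goodN tr x N1" and N2: "goodN tr x N2"
  shows "N1 = N2"
proof -
  obtain A :: "nat \<Rightarrow> 'a word set" where A: "range A \<subseteq> pts_semiring t" "\<Union> (range A) = words t" "\<And>i. tr x (A i) \<noteq> \<infinity>"
    using tr_sf[OF tr x] unfolding sigma_finite_on_def by blast
  show ?thesis
  proof (rule measure_eqI_generator_eq[where E="pts_semiring t" and \<Omega>="words t" and A=A])
    show "Int_stable (pts_semiring t)" by (rule Int_stableI) (rule semiring_Int)
    show "pts_semiring t \<subseteq> Pow (words t)" using semiring_words by blast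
    show "\<And>X. X \<in> pts_semiring t \<Longrightarrow> emeasure N1 X = emeasure N2 X" using N1 N2 by (simp add: goodN_def)
    show "sets N1 = sigma_sets (words t) (pts_semiring t)" using N1 by (simp add: goodN_def)
    show "sets N2 = sigma_sets (words t) (pts_semiring t)" using N2 by (simp add: goodN_def)
    show "range A \<subseteq> pts_semiring t" by (rule A(1))
    show "(\<Union>i. A i) = words t" by (rule A(2))
    show "emeasure N1 (A i) \<noteq> \<infinity>" for i
    proof -
      have "A i \<in> pts_semiring t" using A(1) by blast
      then have "emeasure N1 (A i) = tr x (A i)" using N1 by (simp add: goodN_def)
      then show ?thesis using A(3) by simp
    qed
  qed
qed

lemma N_exists: assumes tr: "trace_eqs t M \<alpha> tr" and x: "x \<in> space M"
  shows "\<exists>N. goodN tr x N"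
proof -
  interpret semiring_of_sets "words t" "pts_semiring t :: 'a word set set" by (rule semiring_of)
  have pos: "positive (pts_semiring t) (tr x)" unfolding positive_def by (rule tr_empty[OF tr x])
  obtain \<mu> where mu: "\<forall>s\<in>pts_semiring t. \<mu> s = tr x s" and ms: "measure_space (words t) (sigma_sets (words t) (pts_semiring t :: 'a word set set)) \<mu>"
    using caratheodory[OF pos tr_ca[OF tr x]] by blast
  have sa: "sigma_algebra (words t) (sigma_sets (words t) (pts_semiring t :: 'a word set set))"
    and pos': "positive (sigma_sets (words t) (pts_semiring t :: 'a word set set)) \<mu>"
    and ca': "countably_additive (sigma_sets (words t) (pts_semiring t :: 'a word set set)) \<mu>"
    using ms unfolding measure_space_def by auto
  define N where "N = measure_of (words t) (sigma_sets (words t) (pts_semiring t :: 'a word set set)) \<mu>"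
  have sc: "sigma_sets (words t) (pts_semiring t :: 'a word set set) \<subseteq> Pow (words t)" using sigma_sets_into_sp[of "pts_semiring t :: 'a word set set" "words t"] semiring_words by blast
  have "sets N = sigma_sets (words t) (sigma_sets (words t) (pts_semiring t :: 'a word set set))"
    unfolding N_def by (rule sets_measure_of[OF sc])
  also have "\<dots> = sigma_sets (words t) (pts_semiring t :: 'a word set set)" by (rule sigma_algebra.sigma_sets_eq[OF sa])
  finally have sN: "sets N = sigma_sets (words t) (pts_semiring t :: 'a word set set)" .
  have spN: "space N = words t" unfolding N_def by (rule space_measure_of[OF sc])
  have "emeasure N S = tr x S" if S: "S \<in> pts_semiring t" for S
  proof -
    have "S \<in> sigma_sets (words t) (pts_semiring t :: 'a word set set)" using S by (rule sigma_sets.Basic)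
    then have "emeasure N S = \<mu> S" unfolding N_def by (rule emeasure_measure_of_sigma[OF sa pos' ca'])
    then show ?thesis using mu S by simp
  qed
  then show ?thesis using sN spN unfolding goodN_def by blast
qed

lemma N_mass: assumes tr: "trace_eqs t M \<alpha> tr" and x: "x \<in> space M" and N: "goodN tr x N"
  shows "emeasure N (space N) \<le> 1 \<and> (t \<in> {TOmega, TInf} \<longrightarrow> emeasure N (space N) = 1)"
proof -
  have sp: "space N = words t" and sN: "sets N = sigma_sets (words t) (pts_semiring t)"
    and em: "\<And>S. S \<in> pts_semiring t \<Longrightarrow> emeasure N S = tr x S" using N by (auto simp: goodN_def)
  show ?thesis
  proof (cases t)
    case T0
    then show ?thesis using sp by simp
  next
    case TOmega
    have "cyl t [] \<in> pts_semiring t" using TOmega by simp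
    then have "emeasure N (space N) = 1"
      using em tr_cy[OF tr _ x, of "[]"] TOmega sp by (simp add: cyl_Nil[symmetric])
    then show ?thesis by simp
  next
    case TInf
    have "cyl t [] \<in> pts_semiring t" using TInf by simp
    then have "emeasure N (space N) = 1"
      using em tr_cy[OF tr _ x, of "[]"] TInf sp by (simp add: cyl_Nil[symmetric])
    then show ?thesis by simp
  next
    case TStar
    have single: "{Inl u} \<in> sets N" for u :: "'a list" using TStar sN by (auto intro: sigma_sets.Basic)
    define B :: "nat \<Rightarrow> 'a word set" where "B k = (\<Union>u\<in>{u::'a list. length u < k}. {Inl u})" for k
    have Bs: "B k \<in> sets N" for k unfolding B_def by (rule sets.finite_UN) (auto simp: finite_len_less single)
    have inc: "incseq B" unfolding B_def incseq_def by auto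
    have UB: "(\<Union>k. B k) = space N"
    proof
      show "(\<Union>k. B k) \<subseteq> space N" using sp TStar by (auto simp: B_def)
      show "space N \<subseteq> (\<Union>k. B k)"
      proof
        fix y assume "y \<in> space N"
        then obtain u where "y = Inl u" using sp TStar by auto
        then have "y \<in> B (Suc (length u))" by (auto simp: B_def)
        then show "y \<in> (\<Union>k. B k)" by blast
      qed
    qed
    have Bk: "emeasure N (B k) \<le> 1" for k
    proof -
      have "(\<Sum>u\<in>{u::'a list. length u < k}. emeasure N {Inl u}) = emeasure N (B k)"
        unfolding B_def by (rule sum_emeasure) (auto simp: single disjoint_family_on_def finite_len_less)
      moreover have "emeasure N {Inl u} = fin u x" for u
        using em[of "{Inl u}"] tr_fin[OF tr _ x] TStar by simp
      ultimately have "emeasure N (B k) = (\<Sum>u\<in>{u::'a list. length u < k}. fin u x)" by simp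
      then show ?thesis using fin_sum_le1[OF x] by simp
    qed
    have "emeasure N (space N) = (SUP k. emeasure N (B k))"
    proof -
      have "range B \<subseteq> sets N" using Bs by blast
      then show ?thesis using SUP_emeasure_incseq[of B N] inc UB by simp
    qed
    also have "\<dots> \<le> 1" by (rule SUP_least) (rule Bk)
    finally show ?thesis using TStar by simp
  qed
qed

end

theorem mainTheorem6:
  fixes t :: ptstype and M :: "'x measure" and \<alpha> :: "'x \<Rightarrow> ('a::finite \<times> 'x) option measure"
  assumes "is_pts t M \<alpha>"
  shows "(\<exists>tr. trace_eqs t M \<alpha> tr)
    \<and> (\<forall>tr tr'. trace_eqs t M \<alpha> tr \<longrightarrow> trace_eqs t M \<alpha> tr' \<longrightarrow>
          (\<forall>x\<in>space M. \<forall>S\<in>pts_semiring t. tr x S = tr' x S))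
    \<and> (\<forall>tr. trace_eqs t M \<alpha> tr \<longrightarrow> (\<forall>x\<in>space M.
          positive (pts_semiring t) (tr x)
        \<and> countably_additive (pts_semiring t) (tr x)
        \<and> (\<forall>S\<in>pts_semiring t. tr x S \<le> 1)
        \<and> sigma_finite_on (words t) (pts_semiring t) (tr x)
        \<and> (\<exists>!N. space N = words t \<and> sets N = sigma_sets (words t) (pts_semiring t)
               \<and> (\<forall>S\<in>pts_semiring t. emeasure N S = tr x S))
        \<and> (\<forall>N. space N = words t \<and> sets N = sigma_sets (words t) (pts_semiring t)
               \<and> (\<forall>S\<in>pts_semiring t. emeasure N S = tr x S) \<longrightarrow>
               emeasure N (space N) \<le> 1
             \<and> (t \<in> {TOmega, TInf} \<longrightarrow> emeasure N (space N) = 1))))"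
proof -
  interpret ptsl t M \<alpha> by unfold_locales (rule assms)
  have 1: "\<exists>tr. trace_eqs t M \<alpha> tr" using tr0_eqs by blast
  have 2: "\<forall>tr tr'. trace_eqs t M \<alpha> tr \<longrightarrow> trace_eqs t M \<alpha> tr' \<longrightarrow>
          (\<forall>x\<in>space M. \<forall>S\<in>pts_semiring t. tr x S = tr' x S)"
    using tr_unique by blast
  have 3: "positive (pts_semiring t) (tr x)
        \<and> countably_additive (pts_semiring t) (tr x)
        \<and> (\<forall>S\<in>pts_semiring t. tr x S \<le> 1)
        \<and> sigma_finite_on (words t) (pts_semiring t) (tr x)
        \<and> (\<exists>!N. space N = words t \<and> sets N = sigma_sets (words t) (pts_semiring t)
               \<and> (\<forall>S\<in>pts_semiring t. emeasure N S = tr x S))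
        \<and> (\<forall>N. space N = words t \<and> sets N = sigma_sets (words t) (pts_semiring t)
               \<and> (\<forall>S\<in>pts_semiring t. emeasure N S = tr x S) \<longrightarrow>
               emeasure N (space N) \<le> 1
             \<and> (t \<in> {TOmega, TInf} \<longrightarrow> emeasure N (space N) = 1))"
    if tr: "trace_eqs t M \<alpha> tr" and x: "x \<in> space M" for tr x
  proof (intro conjI)
    show "positive (pts_semiring t) (tr x)" unfolding positive_def by (rule tr_empty[OF tr x])
    show "countably_additive (pts_semiring t) (tr x)" by (rule tr_ca[OF tr x])
    show "\<forall>S\<in>pts_semiring t. tr x S \<le> 1" using tr_le1[OF tr x] by blast
    show "sigma_finite_on (words t) (pts_semiring t) (tr x)" by (rule tr_sf[OF tr x])
    obtain N0 where N0: "goodN tr x N0" using N_exists[OF tr x] by blast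
    show "\<exists>!N. space N = words t \<and> sets N = sigma_sets (words t) (pts_semiring t)
               \<and> (\<forall>S\<in>pts_semiring t. emeasure N S = tr x S)"
    proof (rule ex1I[of _ N0])
      show "space N0 = words t \<and> sets N0 = sigma_sets (words t) (pts_semiring t)
               \<and> (\<forall>S\<in>pts_semiring t. emeasure N0 S = tr x S)" using N0 by (simp add: goodN_def)
      fix N assume "space N = words t \<and> sets N = sigma_sets (words t) (pts_semiring t)
               \<and> (\<forall>S\<in>pts_semiring t. emeasure N S = tr x S)"
      then have "goodN tr x N" by (simp add: goodN_def)
      then show "N = N0" using N_unique[OF tr x _ N0] by blast
    qed
    show "\<forall>N. space N = words t \<and> sets N = sigma_sets (words t) (pts_semiring t)
               \<and> (\<forall>S\<in>pts_semiring t. emeasure N S = tr x S) \<longrightarrow>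
               emeasure N (space N) \<le> 1
             \<and> (t \<in> {TOmega, TInf} \<longrightarrow> emeasure N (space N) = 1)"
      using N_mass[OF tr x] by (simp add: goodN_def)
  qed
  show ?thesis using 1 2 3 by blast
qed


end
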